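(* Let $p,m,n\in\mathbb{R}$, $a,b,c\in\mathbb{O}$, and $$\mathcal{A}=\begin{pmatrix}p&a&\overline{b}\\ \overline{a}&m&c\\ b&\overline{c}&n\end{pmatrix}.$$ Suppose $v=(x,y,z)^T\in\mathbb{O}^3\setminus\{0\}$ and $\lambda\in\mathbb{O}$ satisfy $\mathcal{A}v=v\lambda$. Then $$\mathrm{Im}(\lambda)=\frac{[x,a,y]+[z,b,x]+[y,c,z]}{|x|^2+|y|^2+|z|^2},$$ and if moreover $|x|^2+|y|^2\neq|z|^2$, $$\mathrm{Re}(\lambda)=\frac{p|x|^2+m|y|^2-n|z|^2+2\,x\cdot(ay)}{|x|^2+|y|^2-|z|^2}.$$ In particular, if $|x|^2+|y|^2+|z|^2=1$ then $\mathrm{Im}(\lambda)=[x,a,y]+[z,b,x]+[y,c,z]$.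
   Context: $\mathbb{O}$ denotes the octonions, $\overline{a}$ conjugation, $\mathrm{Re}(a)=\frac12(a+\overline a)$, $\mathrm{Im}(a)=\frac12(a-\overline a)$, $|a|$ the norm, $[a,b,c]=(ab)c-a(bc)$ the associator, and $a\cdot b=\frac12(a\overline b+b\overline a)$ the Euclidean inner product of $\mathbb{R}^8$. $v\lambda$ means each component multiplied on the right by $\lambda$. *)

theory Defs
  imports Complex_Main
begin

text \<open>Doubling rule (Baez convention): (a,b)(c,d) = (ac - d* b, da + b c*),
  conjugate (a,b)* = (a*, -b).  Quaternions are pairs of complex numbers,
  octonions are pairs of quaternions.\<close>

datatype quat = Quat complex complex

instantiation quat :: "{zero, one, plus, minus, uminus, times}"
begin
definition "0 = Quat 0 0"
definition "1 = Quat 1 0"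
fun plus_quat where "Quat a b + Quat c d = Quat (a + c) (b + d)"
fun minus_quat where "Quat a b - Quat c d = Quat (a - c) (b - d)"
fun uminus_quat where "- Quat a b = Quat (- a) (- b)"
fun times_quat where "Quat a b * Quat c d = Quat (a * c - cnj d * b) (d * a + b * cnj c)"
instance ..
end

fun qcnj :: "quat \<Rightarrow> quat" where "qcnj (Quat a b) = Quat (cnj a) (- b)"

fun qnormsq :: "quat \<Rightarrow> real" where "qnormsq (Quat a b) = (cmod a)\<^sup>2 + (cmod b)\<^sup>2"

datatype oct = Oct quat quat

instantiation oct :: "{zero, one, plus, minus, uminus, times, scaleR}"
begin
definition "0 = Oct 0 0"
definition "1 = Oct 1 0"
fun plus_oct where "Oct a b + Oct c d = Oct (a + c) (b + d)"
fun minus_oct where "Oct a b - Oct c d = Oct (a - c) (b - d)"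
fun uminus_oct where "- Oct a b = Oct (- a) (- b)"
fun times_oct where "Oct a b * Oct c d = Oct (a * c - qcnj d * b) (d * a + b * qcnj c)"
fun scaleR_quat :: "real \<Rightarrow> quat \<Rightarrow> quat" where
  "scaleR_quat r (Quat a b) = Quat (complex_of_real r * a) (complex_of_real r * b)"
fun scaleR_oct where "scaleR_oct r (Oct a b) = Oct (scaleR_quat r a) (scaleR_quat r b)"
instance ..
end

fun ocnj :: "oct \<Rightarrow> oct" where "ocnj (Oct a b) = Oct (qcnj a) (- b)"

definition oreal :: "real \<Rightarrow> oct" where "oreal r = scaleR r 1"

text \<open>Real part: the real number r with \<open>oreal r = (a + ocnj a)/2\<close>.\<close>
fun ore :: "oct \<Rightarrow> real" where "ore (Oct (Quat z w) q) = Re z"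

definition oim :: "oct \<Rightarrow> oct" where "oim a = scaleR (1/2) (a - ocnj a)"

fun onorm :: "oct \<Rightarrow> real" where "onorm (Oct a b) = sqrt (qnormsq a + qnormsq b)"

definition assoc :: "oct \<Rightarrow> oct \<Rightarrow> oct \<Rightarrow> oct" where
  "assoc a b c = (a * b) * c - a * (b * c)"

definition oinner :: "oct \<Rightarrow> oct \<Rightarrow> real" where
  "oinner a b = ore (scaleR (1/2) (a * ocnj b + b * ocnj a))"

end

theory Submission
  imports Defs
begin
lemma oct_exp: obtains a b c d where "x = Oct (Quat a b) (Quat c d)"
  by (metis oct.exhaust quat.exhaust)
lemma onorm_sq: "(onorm (Oct (Quat a b) (Quat c d)))^2 = (Re a)^2 + (Im a)^2 + (Re b)^2 + (Im b)^2 + (Re c)^2 + (Im c)^2 + (Re d)^2 + (Im d)^2"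
  by (simp add: cmod_power2 add_nonneg_nonneg)
lemmas osimps = zero_oct_def one_oct_def zero_quat_def one_quat_def oreal_def oim_def assoc_def oinner_def complex_eq_iff onorm_sq
declare onorm.simps[simp del]

lemma L1: "ocnj x * (x * l) = (onorm x)^2 *\<^sub>R l"
  apply (cases x rule: oct_exp; cases l rule: oct_exp)
  apply (simp add: osimps)
  apply (simp add: algebra_simps power2_eq_square)
  done
lemma distr: "u * (v + w) = u * v + u * (w::oct)"
  apply (cases u rule: oct_exp; cases v rule: oct_exp; cases w rule: oct_exp)
  by (simp add: osimps algebra_simps)
lemma distr2: "u * (v - w) = u * v - u * (w::oct)"
  apply (cases u rule: oct_exp; cases v rule: oct_exp; cases w rule: oct_exp)
  by (simp add: osimps algebra_simps)
lemma sc_add: "r *\<^sub>R l + s *\<^sub>R l = (r + s) *\<^sub>R (l::oct)"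
  apply (cases l rule: oct_exp) by (simp add: osimps algebra_simps)
lemma sc_diff: "r *\<^sub>R l - s *\<^sub>R l = (r - s) *\<^sub>R (l::oct)"
  apply (cases l rule: oct_exp) by (simp add: osimps algebra_simps)
lemma sc_sc: "r *\<^sub>R (s *\<^sub>R l) = (r * s) *\<^sub>R (l::oct)"
  apply (cases l rule: oct_exp) by (simp add: osimps algebra_simps)
lemma sc_one: "1 *\<^sub>R l = (l::oct)"
  apply (cases l rule: oct_exp) by (simp add: osimps algebra_simps)
lemma oim_sc: "oim (r *\<^sub>R l) = r *\<^sub>R oim l"
  apply (cases l rule: oct_exp) by (simp add: osimps algebra_simps)
lemma ore_sc: "ore (r *\<^sub>R l) = r * ore l"
  apply (cases l rule: oct_exp) by (simp add: osimps algebra_simps)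
lemma onorm_nn: "(onorm x)^2 \<ge> 0"
  apply (cases x rule: oct_exp) by (simp add: osimps)
lemma onorm_z: "(onorm x)^2 = 0 \<Longrightarrow> x = 0"
  apply (cases x rule: oct_exp) by (simp add: osimps add_nonneg_eq_0_iff)

lemma bigIm: "oim ((ocnj x * (oreal p * x) + ocnj x * (a * y) + ocnj x * (ocnj b * z))
  + (ocnj y * (ocnj a * x) + ocnj y * (oreal m * y) + ocnj y * (c * z))
  + (ocnj z * (b * x) + ocnj z * (ocnj c * y) + ocnj z * (oreal n * z)))
  = assoc x a y + assoc z b x + assoc y c z"
  apply (cases x rule: oct_exp; cases y rule: oct_exp; cases z rule: oct_exp;
         cases a rule: oct_exp; cases b rule: oct_exp; cases c rule: oct_exp)
  apply (simp add: osimps)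
  apply (simp add: algebra_simps)
  done

lemma ore_add: "ore (u + v) = ore u + ore v"
  apply (cases u rule: oct_exp; cases v rule: oct_exp) by (simp add: osimps)
lemma ore_diff: "ore (u - v) = ore u - ore v"
  apply (cases u rule: oct_exp; cases v rule: oct_exp) by (simp add: osimps)
lemma r1: "ore (ocnj x * (oreal p * x)) = p * (onorm x)^2"
  apply (cases x rule: oct_exp)
  apply (simp add: osimps)
  apply (simp add: algebra_simps power2_eq_square)
  done
lemma r2: "ore (ocnj x * (a * y) + ocnj y * (ocnj a * x)) = 2 * oinner x (a * y)"
  apply (cases x rule: oct_exp; cases y rule: oct_exp; cases a rule: oct_exp)
  apply (simp add: osimps)
  apply (simp add: algebra_simps)
  done
lemma r3: "ore (ocnj x * (ocnj b * z)) = ore (ocnj z * (b * x))"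
  apply (cases x rule: oct_exp; cases z rule: oct_exp; cases b rule: oct_exp)
  apply (simp add: osimps)
  apply (simp add: algebra_simps)
  done
lemma r4: "ore (ocnj y * (c * z)) = ore (ocnj z * (ocnj c * y))"
  apply (cases y rule: oct_exp; cases z rule: oct_exp; cases c rule: oct_exp)
  apply (simp add: osimps)
  apply (simp add: algebra_simps)
  done
lemma bigRe: "ore ((ocnj x * (oreal p * x) + ocnj x * (a * y) + ocnj x * (ocnj b * z))
  + (ocnj y * (ocnj a * x) + ocnj y * (oreal m * y) + ocnj y * (c * z))
  - (ocnj z * (b * x) + ocnj z * (ocnj c * y) + ocnj z * (oreal n * z)))
  = p * (onorm x)\<^sup>2 + m * (onorm y)\<^sup>2 - n * (onorm z)\<^sup>2 + 2 * oinner x (a * y)"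
proof -
  have "ore (ocnj x * (a * y)) + ore (ocnj y * (ocnj a * x)) = 2 * oinner x (a * y)"
    using r2 ore_add by metis
  then show ?thesis using r1[of x p] r1[of y m] r1[of z n] r3[of x b z] r4[of y c z]
    by (simp add: ore_add ore_diff)
qed
theorem mainTheorem6:
  fixes p m n :: real and a b c x y z lam :: oct
  assumes nz: "(x, y, z) \<noteq> (0, 0, 0)"
    and e1: "oreal p * x + a * y + ocnj b * z = x * lam"
    and e2: "ocnj a * x + oreal m * y + c * z = y * lam"
    and e3: "b * x + ocnj c * y + oreal n * z = z * lam"
  shows "oim lam = scaleR (1 / ((onorm x)\<^sup>2 + (onorm y)\<^sup>2 + (onorm z)\<^sup>2))
                 (assoc x a y + assoc z b x + assoc y c z)
     \<and> ((onorm x)\<^sup>2 + (onorm y)\<^sup>2 \<noteq> (onorm z)\<^sup>2 \<longrightarrow>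
           ore lam = (p * (onorm x)\<^sup>2 + m * (onorm y)\<^sup>2 - n * (onorm z)\<^sup>2 + 2 * oinner x (a * y))
                   / ((onorm x)\<^sup>2 + (onorm y)\<^sup>2 - (onorm z)\<^sup>2))
     \<and> ((onorm x)\<^sup>2 + (onorm y)\<^sup>2 + (onorm z)\<^sup>2 = 1 \<longrightarrow>
           oim lam = assoc x a y + assoc z b x + assoc y c z)"
proof -
  define Nx where "Nx = (onorm x)^2"
  define Ny where "Ny = (onorm y)^2"
  define Nz where "Nz = (onorm z)^2"
  have h1: "ocnj x * (oreal p * x) + ocnj x * (a*y) + ocnj x * (ocnj b * z) = Nx *\<^sub>R lam"
    using arg_cong[OF e1, of "(*) (ocnj x)"] by (simp add: distr L1 Nx_def)
  have h2: "ocnj y * (ocnj a * x) + ocnj y * (oreal m * y) + ocnj y * (c * z) = Ny *\<^sub>R lam"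
    using arg_cong[OF e2, of "(*) (ocnj y)"] by (simp add: distr L1 Ny_def)
  have h3: "ocnj z * (b * x) + ocnj z * (ocnj c * y) + ocnj z * (oreal n * z) = Nz *\<^sub>R lam"
    using arg_cong[OF e3, of "(*) (ocnj z)"] by (simp add: distr L1 Nz_def)
  have Npos: "Nx + Ny + Nz \<noteq> 0"
  proof
    assume "Nx + Ny + Nz = 0"
    moreover have "Nx \<ge> 0" "Ny \<ge> 0" "Nz \<ge> 0" using onorm_nn Nx_def Ny_def Nz_def by auto
    ultimately have "Nx = 0" "Ny = 0" "Nz = 0" by auto
    then have "x = 0" "y = 0" "z = 0" using onorm_z Nx_def Ny_def Nz_def by auto
    with nz show False by simp
  qed
  have "(Nx + Ny + Nz) *\<^sub>R oim lam = assoc x a y + assoc z b x + assoc y c z"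
    using bigIm[of x p a y b z m c n] h1 h2 h3 by (simp add: sc_add oim_sc)
  then have I: "oim lam = (1 / (Nx + Ny + Nz)) *\<^sub>R (assoc x a y + assoc z b x + assoc y c z)"
    using Npos by (metis sc_sc sc_one nonzero_divide_eq_eq times_divide_eq_left)
  have R: "Nx + Ny \<noteq> Nz \<longrightarrow> ore lam = (p * Nx + m * Ny - n * Nz + 2 * oinner x (a * y)) / (Nx + Ny - Nz)"
  proof
    assume "Nx + Ny \<noteq> Nz"
    have "(Nx + Ny - Nz) * ore lam = p * Nx + m * Ny - n * Nz + 2 * oinner x (a * y)"
      using bigRe[of x p a y b z m c n] h1 h2 h3 by (simp add: sc_add sc_diff ore_sc Nx_def Ny_def Nz_def)
    then show "ore lam = (p * Nx + m * Ny - n * Nz + 2 * oinner x (a * y)) / (Nx + Ny - Nz)"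
      using \<open>Nx + Ny \<noteq> Nz\<close> by (simp add: field_simps)
  qed
  show ?thesis using I R by (simp add: Nx_def Ny_def Nz_def sc_one)
qed

end
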